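(* Let $A$ be a vector space with bilinear operations $\star,[-,-]$, and $x\cdot y=x\star y+y\star x$. (1) If $(A,\cdot,[-,-])$ is a transposed Poisson algebra, $(A,\star)$ is Zinbiel, and $(\mathcal{L}_{\star},\mathrm{ad},A)$ is a representation of the transposed Poisson algebra $(A,\cdot,[-,-])$, then $(A,\star,[-,-])$ is a TZLO algebra, i.e. $x\star[y,z]=[x,y]\star z=[x,y\star z]=0$ for all $x,y,z\in A$. (2) Conversely, if $(A,\star,[-,-])$ is a TZLO algebra, then $(A,\cdot,[-,-])$ is a transposed Poisson algebra with representation $(\mathcal{L}_{\star},\mathrm{ad},A)$.
   Context: Finite-dimensional spaces, characteristic zero. $\mathcal{L}_\star(x)y=x\star y$, $\mathrm{ad}(x)y=[x,y]$. Zinbiel: $x\star(y\star z)=(x\star y)\star z+(y\star x)\star z$. Transposed Poisson algebra: $(A,\cdot)$ commutative associative, $(A,[-,-])$ Lie, $2z\cdot[x,y]=[z\cdot x,y]+[x,z\cdot y]$. A representation of a transposed Poisson algebra is $(\mu,\rho,V)$ with $\mu(x\cdot y)=\mu(x)\mu(y)$, $\rho([x,y])=[\rho(x),\rho(y)]$, $2\mu(x)\rho(y)=\rho(x\cdot y)+\rho(y)\mu(x)$, $2\mu([x,y])=\rho(x)\mu(y)-\rho(y)\mu(x)$. A TZLO algebra is $(A,\star,[-,-])$ with $(A,\star)$ Zinbiel, $(A,[-,-])$ Lie, and $x\star[y,z]=[x,y]\star z=[x,y\star z]=0$ for all $x,y,z$. *)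

theory Defs
  imports Complex_Main
begin

definition fin_dim_vs :: "('k::field_char_0 \<Rightarrow> 'v::ab_group_add \<Rightarrow> 'v) \<Rightarrow> bool" where
  "fin_dim_vs sc \<longleftrightarrow> (\<exists>B. finite_dimensional_vector_space sc B)"

definition bilinear_op :: "('k::field \<Rightarrow> 'v::ab_group_add \<Rightarrow> 'v) \<Rightarrow> ('v \<Rightarrow> 'v \<Rightarrow> 'v) \<Rightarrow> bool" where
  "bilinear_op sc m \<longleftrightarrow> (\<forall>x. Vector_Spaces.linear sc sc (m x)) \<and> (\<forall>y. Vector_Spaces.linear sc sc (\<lambda>x. m x y))"

definition zinbiel :: "('v \<Rightarrow> 'v \<Rightarrow> 'v::ab_group_add) \<Rightarrow> bool" where
  "zinbiel st \<longleftrightarrow> (\<forall>x y z. st x (st y z) = st (st x y) z + st (st y x) z)"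

definition lie_alg :: "('v \<Rightarrow> 'v \<Rightarrow> 'v::ab_group_add) \<Rightarrow> bool" where
  "lie_alg br \<longleftrightarrow> (\<forall>x. br x x = 0) \<and>
     (\<forall>x y z. br x (br y z) + br y (br z x) + br z (br x y) = 0)"

definition comm_assoc_alg :: "('v \<Rightarrow> 'v \<Rightarrow> 'v) \<Rightarrow> bool" where
  "comm_assoc_alg m \<longleftrightarrow> (\<forall>x y. m x y = m y x) \<and> (\<forall>x y z. m (m x y) z = m x (m y z))"

definition transposed_poisson :: "('k::field \<Rightarrow> 'v::ab_group_add \<Rightarrow> 'v) \<Rightarrow> ('v \<Rightarrow> 'v \<Rightarrow> 'v) \<Rightarrow> ('v \<Rightarrow> 'v \<Rightarrow> 'v) \<Rightarrow> bool" where
  "transposed_poisson sc dot br \<longleftrightarrow> comm_assoc_alg dot \<and> lie_alg br \<and>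
     (\<forall>x y z. sc 2 (dot z (br x y)) = br (dot z x) y + br x (dot z y))"

text \<open>Representation (mu, rho, V) of the transposed Poisson algebra (A, dot, br):
mu, rho linear maps from A to linear endomorphisms of V, satisfying the four identities
(compositions written pointwise on v in V).\<close>

definition tp_rep :: "('k::field \<Rightarrow> 'v::ab_group_add \<Rightarrow> 'v) \<Rightarrow> ('k \<Rightarrow> 'w::ab_group_add \<Rightarrow> 'w)
    \<Rightarrow> ('v \<Rightarrow> 'v \<Rightarrow> 'v) \<Rightarrow> ('v \<Rightarrow> 'v \<Rightarrow> 'v) \<Rightarrow> ('v \<Rightarrow> 'w \<Rightarrow> 'w) \<Rightarrow> ('v \<Rightarrow> 'w \<Rightarrow> 'w) \<Rightarrow> bool" where
  "tp_rep scA scV dot br \<mu> \<rho> \<longleftrightarrow>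
     (\<forall>x. Vector_Spaces.linear scV scV (\<mu> x)) \<and> (\<forall>x. Vector_Spaces.linear scV scV (\<rho> x)) \<and>
     (\<forall>v. Vector_Spaces.linear scA scV (\<lambda>x. \<mu> x v)) \<and> (\<forall>v. Vector_Spaces.linear scA scV (\<lambda>x. \<rho> x v)) \<and>
     (\<forall>x y v. \<mu> (dot x y) v = \<mu> x (\<mu> y v)) \<and>
     (\<forall>x y v. \<rho> (br x y) v = \<rho> x (\<rho> y v) - \<rho> y (\<rho> x v)) \<and>
     (\<forall>x y v. scV 2 (\<mu> x (\<rho> y v)) = \<rho> (dot x y) v + \<rho> y (\<mu> x v)) \<and>
     (\<forall>x y v. scV 2 (\<mu> (br x y) v) = \<rho> x (\<mu> y v) - \<rho> y (\<mu> x v))"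

definition tzlo :: "('v \<Rightarrow> 'v \<Rightarrow> 'v::ab_group_add) \<Rightarrow> ('v \<Rightarrow> 'v \<Rightarrow> 'v) \<Rightarrow> bool" where
  "tzlo st br \<longleftrightarrow> zinbiel st \<and> lie_alg br \<and>
     (\<forall>x y z. st x (br y z) = 0 \<and> st (br x y) z = 0 \<and> br x (st y z) = 0)"

end

theory Submission
  imports Defs
begin

lemma lin_add: "Vector_Spaces.linear s s f \<Longrightarrow> f (a + b) = f a + f b"
  using module_hom.add[OF module_hom_linearI] by blast

lemma bil_add1: "bilinear_op sc m \<Longrightarrow> m (a + b) c = m a c + m b c"
  unfolding bilinear_op_def using lin_add[of sc "\<lambda>x. m x c"] by blast

lemma bil_add2: "bilinear_op sc m \<Longrightarrow> m c (a + b) = m c a + m c b"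
  unfolding bilinear_op_def using lin_add[of sc "m c"] by blast

lemma bil_0_1: "bilinear_op sc m \<Longrightarrow> m 0 c = 0"
  using bil_add1[of sc m 0 0 c] by simp

lemma bil_0_2: "bilinear_op sc m \<Longrightarrow> m c 0 = 0"
  using bil_add2[of sc m c 0 0] by simp

lemma bil_neg2: "bilinear_op sc m \<Longrightarrow> m c (- a) = - m c a"
  using bil_add2[of sc m c a "-a"] bil_0_2[of sc m c] by (simp add: eq_neg_iff_add_eq_0 add.commute)

lemma antisym:
  assumes "bilinear_op sc br" "lie_alg br"
  shows "br y x = - br x y"
proof -
  have "br (x+y) (x+y) = 0" using assms(2) unfolding lie_alg_def by blast
  hence "br x x + br x y + (br y x + br y y) = 0"
    using bil_add1[OF assms(1)] bil_add2[OF assms(1)] by (simp add: add_ac)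
  moreover have "br x x = 0" "br y y = 0" using assms(2) unfolding lie_alg_def by blast+
  ultimately show ?thesis by (simp add: eq_neg_iff_add_eq_0 add.commute)
qed

lemma vs: "fin_dim_vs sc \<Longrightarrow> vector_space sc"
  unfolding fin_dim_vs_def using finite_dimensional_vector_space.axioms(1) by (elim exE)

lemma sc2: "vector_space sc \<Longrightarrow> sc (2::'k::field_char_0) v = v + v"
proof -
  assume V: "vector_space sc"
  have "sc (1+1) v = sc 1 v + sc 1 v" by (rule vector_space.vector_space_assms(2)[OF V])
  moreover have "sc 1 v = v" by (rule vector_space.vector_space_assms(4)[OF V])
  moreover have "(1+1::'k) = 2" by simp
  ultimately show ?thesis by simp
qed

lemma sc2_0: "vector_space sc \<Longrightarrow> sc (2::'k::field_char_0) v = 0 \<Longrightarrow> v = 0"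
proof -
  assume a: "vector_space sc" "sc 2 v = 0"
  have "sc (1/2) (sc 2 v) = sc ((1/2) * 2) v" using vector_space.vector_space_assms(3)[OF a(1)] by blast
  also have "\<dots> = v" using vector_space.vector_space_assms(4)[OF a(1)] by simp
  finally have "v = sc (1/2) 0" using a(2) by simp
  also have "sc (1/2) 0 = 0"
    using vector_space.vector_space_assms(1)[OF a(1), of "1/2" 0 0] by simp
  finally show ?thesis .
qed

theorem mainTheorem10:
  fixes sc :: "'k::field_char_0 \<Rightarrow> 'v::ab_group_add \<Rightarrow> 'v"
    and st br :: "'v \<Rightarrow> 'v \<Rightarrow> 'v"
  assumes "fin_dim_vs sc"
    and "bilinear_op sc st" and "bilinear_op sc br"
  shows "(transposed_poisson sc (\<lambda>x y. st x y + st y x) br \<and> zinbiel st \<and>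
           tp_rep sc sc (\<lambda>x y. st x y + st y x) br st br
          \<longrightarrow> tzlo st br)
       \<and> (tzlo st br \<longrightarrow>
           transposed_poisson sc (\<lambda>x y. st x y + st y x) br \<and>
           tp_rep sc sc (\<lambda>x y. st x y + st y x) br st br)"
proof
  have V: "vector_space sc" using vs[OF assms(1)] .
  note a1 = bil_add1[OF assms(2)] bil_add2[OF assms(2)] bil_add1[OF assms(3)] bil_add2[OF assms(3)]
  note s2 = sc2[OF V]
  show "transposed_poisson sc (\<lambda>x y. st x y + st y x) br \<and> zinbiel st \<and>
           tp_rep sc sc (\<lambda>x y. st x y + st y x) br st br \<longrightarrow> tzlo st br"
  proof
    assume H: "transposed_poisson sc (\<lambda>x y. st x y + st y x) br \<and> zinbiel st \<and>
           tp_rep sc sc (\<lambda>x y. st x y + st y x) br st br"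
    have TPd: "transposed_poisson sc (\<lambda>x y. st x y + st y x) br" using H by (rule conjunct1)
    have R: "tp_rep sc sc (\<lambda>x y. st x y + st y x) br st br" using H by blast
    have lie: "lie_alg br" using TPd unfolding transposed_poisson_def by blast
    note as = antisym[OF assms(3) lie]
    have tp: "\<And>x y z. sc 2 (st z (br x y) + st (br x y) z) = br (st z x + st x z) y + br x (st z y + st y z)"
      using TPd unfolding transposed_poisson_def by blast
    have c0: "\<forall>x y v. sc 2 (st x (br y v)) = br (st x y + st y x) v + br y (st x v)"
      using R unfolding tp_rep_def by (elim conjE) assumption
    have d0: "\<forall>x y v. sc 2 (st (br x y) v) = br x (st y v) - br y (st x v)"
      using R unfolding tp_rep_def by (elim conjE) assumption
    note c = c0[rule_format] and d = d0[rule_format]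
    have e1: "\<And>x y z. sc 2 (st (br x y) z) = br x (st y z)"
    proof -
      fix x y z
      have "sc 2 (st z (br x y) + st (br x y) z) = sc 2 (st z (br x y)) + sc 2 (st (br x y) z)"
        by (rule vector_space.vector_space_assms(1)[OF V])
      thus "sc 2 (st (br x y) z) = br x (st y z)"
        using tp[of z x y] c[of z x y] a1 by (simp add: algebra_simps)
    qed
    have k1: "\<And>x y z. br y (st x z) = 0"
    proof -
      fix x y z
      have "br x (st y z) = br x (st y z) - br y (st x z)" using e1[of x y z] d[of x y z] by simp
      thus "br y (st x z) = 0" by simp
    qed
    have k2: "\<And>x y z. st (br x y) z = 0"
    proof -
      fix x y z
      have "sc 2 (st (br x y) z) = 0" using e1[of x y z] k1 by simp
      thus "st (br x y) z = 0" using sc2_0[OF V] by blast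
    qed
    have k3: "\<And>x y z. st x (br y z) = 0"
    proof -
      fix x y z
      have "sc 2 (st x (br y z)) = 0"
        using c[of x y z] k1 as[of z "st x y"] as[of z "st y x"] a1 by simp
      thus "st x (br y z) = 0" using sc2_0[OF V] by blast
    qed
    show "tzlo st br" unfolding tzlo_def using H lie k1 k2 k3 by simp
  qed
  show "tzlo st br \<longrightarrow>
           transposed_poisson sc (\<lambda>x y. st x y + st y x) br \<and>
           tp_rep sc sc (\<lambda>x y. st x y + st y x) br st br"
  proof
    assume T: "tzlo st br"
    have lie: "lie_alg br" and z: "zinbiel st" using T unfolding tzlo_def by blast+
    have k1: "\<And>x y z. st x (br y z) = 0" "\<And>x y z. st (br x y) z = 0" "\<And>x y z. br x (st y z) = 0"
      using T unfolding tzlo_def by blast+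
    note as = antisym[OF assms(3) lie]
    have zi: "\<And>x y z. st x (st y z) = st (st x y) z + st (st y x) z" using z unfolding zinbiel_def by blast
    have zero2: "sc 2 0 = 0" using s2 by simp
    have br0: "\<And>x. br x 0 = 0" "\<And>x. br 0 x = 0" using bil_0_1[OF assms(3)] bil_0_2[OF assms(3)] by auto
    have ass: "\<And>x y z. st (st x y + st y x) z + st z (st x y + st y x) = st x (st y z + st z y) + st (st y z + st z y) x"
    proof -
      fix x y z
      have "st z (st x y) = st x (st z y)" using zi[of z x y] zi[of x z y] by (simp add: add.commute)
      thus "st (st x y + st y x) z + st z (st x y + st y x) = st x (st y z + st z y) + st (st y z + st z y) x"
        using zi[of x y z] zi[of z y x] a1 by (simp add: algebra_simps)
    qed
    have ca: "comm_assoc_alg (\<lambda>x y. st x y + st y x)"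
      unfolding comm_assoc_alg_def
    proof (intro conjI allI)
      fix x y z
      show "st x y + st y x = st y x + st x y" by (rule add.commute)
      show "st (st x y + st y x) z + st z (st x y + st y x) = st x (st y z + st z y) + st (st y z + st z y) x"
        by (rule ass)
    qed
    have tpid: "\<And>x y z. br (st z x + st x z) y + br x (st z y + st y z) = 0"
    proof -
      fix x y z
      show "br (st z x + st x z) y + br x (st z y + st y z) = 0"
        using as[of y "st z x + st x z"] k1(3)[of y z x] k1(3)[of y x z] k1(3)[of x z y] k1(3)[of x y z]
          bil_add2[OF assms(3), of y "st z x" "st x z"] bil_add2[OF assms(3), of x "st z y" "st y z"] by simp
    qed
    have "transposed_poisson sc (\<lambda>x y. st x y + st y x) br"
      unfolding transposed_poisson_def using ca lie tpid k1 zero2 by simp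
    moreover have "tp_rep sc sc (\<lambda>x y. st x y + st y x) br st br"
    proof -
      have jac: "\<And>x y v. br (br x y) v = br x (br y v) - br y (br x v)"
      proof -
        fix x y v
        have "br x (br y v) + br y (br v x) + br v (br x y) = 0" using lie unfolding lie_alg_def by blast
        thus "br (br x y) v = br x (br y v) - br y (br x v)"
        proof -
          assume J: "br x (br y v) + br y (br v x) + br v (br x y) = 0"
          have "br y (br v x) = - br y (br x v)" using as[of x v] bil_neg2[OF assms(3)] by simp
          moreover have "br v (br x y) = - br (br x y) v" using as[of "br x y" v] by simp
          ultimately show ?thesis using J by (simp add: algebra_simps)
        qed
      qed
      have c: "\<And>x y v. sc 2 (st x (br y v)) = br (st x y + st y x) v + br y (st x v)"
      proof -
        fix x y v
        show "sc 2 (st x (br y v)) = br (st x y + st y x) v + br y (st x v)"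
          using as[of v "st x y + st y x"] k1(1)[of x y v] k1(3)[of v x y] k1(3)[of v y x] k1(3)[of y x v]
            bil_add2[OF assms(3), of v "st x y" "st y x"] zero2 by simp
      qed
      have d: "\<And>x y v. sc 2 (st (br x y) v) = br x (st y v) - br y (st x v)"
        using k1 zero2 by simp
      have m: "\<And>x y v. st (st x y + st y x) v = st x (st y v)"
        using zi bil_add1[OF assms(2)] by simp
      have l: "(\<forall>x. Vector_Spaces.linear sc sc (st x)) \<and> (\<forall>x. Vector_Spaces.linear sc sc (br x)) \<and>
         (\<forall>v. Vector_Spaces.linear sc sc (\<lambda>x. st x v)) \<and> (\<forall>v. Vector_Spaces.linear sc sc (\<lambda>x. br x v))"
        using assms(2,3) unfolding bilinear_op_def by blast
      have m': "\<forall>x y v. st (st x y + st y x) v = st x (st y v)" using m by (intro allI)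
      have jac': "\<forall>x y v. br (br x y) v = br x (br y v) - br y (br x v)" using jac by (intro allI)
      have c': "\<forall>x y v. sc 2 (st x (br y v)) = br (st x y + st y x) v + br y (st x v)" using c by (intro allI)
      have d': "\<forall>x y v. sc 2 (st (br x y) v) = br x (st y v) - br y (st x v)" using d by (intro allI)
      show ?thesis unfolding tp_rep_def using l m' jac' c' d' by (elim conjE) (intro conjI; assumption)
    qed
    ultimately show "transposed_poisson sc (\<lambda>x y. st x y + st y x) br \<and>
           tp_rep sc sc (\<lambda>x y. st x y + st y x) br st br" by blast
  qed
qed

end
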